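(* Let $R$ be a commutative ring, let $\mathfrak{m}_1,\ldots,\mathfrak{m}_d$ be finitely many distinct maximal ideals of $R$, let $c_1,\ldots,c_d\geq 1$ be integers and $I=\bigcap_{i=1}^d \mathfrak{m}_i^{c_i}$. Then $R/I$ is a GPP-ring.
   Context: A commutative ring $A$ is a GPP-ring (generalized p.p. ring) if for each $f\in A$ there exists an integer $n\geq 1$ such that the ideal $Af^n$ is a projective $A$-module. *)

theory Defs
  imports "HOL-Algebra.Algebra"
begin

text \<open>Elements of the free R-module on the set carrier M: finitely supported
  functions from carrier M to carrier R (zero outside carrier M).\<close>
definition free_on_carrier ::
  "('a, 'c) ring_scheme \<Rightarrow> ('a, 'b, 'd) module_scheme \<Rightarrow> ('b \<Rightarrow> 'a) set" where
  "free_on_carrier R M =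
     {\<phi>. (\<forall>z. \<phi> z \<in> carrier R) \<and> (\<forall>z. z \<notin> carrier M \<longrightarrow> \<phi> z = \<zero>\<^bsub>R\<^esub>)
          \<and> finite {z. \<phi> z \<noteq> \<zero>\<^bsub>R\<^esub>}}"

text \<open>M is a projective R-module: M is a direct summand of a free module, namely
  the canonical surjection from the free module on carrier M onto M,
  phi maps to the sum of phi z times z, has an R-linear section s.\<close>
definition projective_module ::
  "('a, 'c) ring_scheme \<Rightarrow> ('a, 'b, 'd) module_scheme \<Rightarrow> bool" where
  "projective_module R M \<longleftrightarrow> module R M \<and>
     (\<exists>s. (\<forall>x\<in>carrier M. s x \<in> free_on_carrier R M)
        \<and> (\<forall>x\<in>carrier M. \<forall>y\<in>carrier M.
              s (x \<oplus>\<^bsub>M\<^esub> y) = (\<lambda>z. s x z \<oplus>\<^bsub>R\<^esub> s y z))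
        \<and> (\<forall>a\<in>carrier R. \<forall>x\<in>carrier M.
              s (a \<odot>\<^bsub>M\<^esub> x) = (\<lambda>z. a \<otimes>\<^bsub>R\<^esub> s x z))
        \<and> (\<forall>x\<in>carrier M.
              finsum M (\<lambda>z. s x z \<odot>\<^bsub>M\<^esub> z) {z \<in> carrier M. s x z \<noteq> \<zero>\<^bsub>R\<^esub>} = x))"

definition ideal_module :: "('a, 'c) ring_scheme \<Rightarrow> 'a set \<Rightarrow> ('a, 'a) module" where
  "ideal_module A J = \<lparr>carrier = J, monoid.mult = monoid.mult A, monoid.one = monoid.one A,
     ring.zero = ring.zero A, ring.add = ring.add A, module.smult = monoid.mult A\<rparr>"

definition GPP_ring :: "('a, 'c) ring_scheme \<Rightarrow> bool" where
  "GPP_ring A \<longleftrightarrow> cring A \<and>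
     (\<forall>f\<in>carrier A. \<exists>n::nat. n \<ge> 1 \<and>
        projective_module A (ideal_module A (PIdl\<^bsub>A\<^esub> (f [^]\<^bsub>A\<^esub> n))))"

definition ideal_pow :: "('a, 'c) ring_scheme \<Rightarrow> 'a set \<Rightarrow> nat \<Rightarrow> 'a set" where
  "ideal_pow R I k = I [^]\<^bsub>ideals_set R\<^esub> k"

end

theory Submission
  imports Defs
begin

lemma ideal_pow_0: "ideal_pow R I 0 = carrier R"
  by (simp add: ideal_pow_def nat_pow_def ideals_set_def)

lemma ideal_pow_Suc: "ideal_pow R I (Suc k) = ideal_prod R (ideal_pow R I k) I"
  by (simp add: ideal_pow_def nat_pow_def ideals_set_def)

lemma (in ring) ideal_pow_ideal: "ideal I R \<Longrightarrow> ideal (ideal_pow R I k) R"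
  by (induct k) (auto simp: ideal_pow_0 ideal_pow_Suc oneideal ideal_prod_is_ideal)

lemma (in ring) ideal_pow_mem: "ideal I R \<Longrightarrow> x \<in> I \<Longrightarrow> x [^] (k::nat) \<in> ideal_pow R I k"
  by (induct k) (auto simp: ideal_pow_0 ideal_pow_Suc intro: ideal_prod.prod)

lemma (in cring) one_minus_pow:
  assumes "a \<in> carrier R"
  shows "\<exists>z\<in>carrier R. (\<one> \<ominus> a) [^] (k::nat) = \<one> \<ominus> a \<otimes> z"
proof (induct k)
  case 0
  show ?case by (rule bexI[of _ \<zero>]) (use assms in \<open>simp_all add: a_minus_def\<close>)
next
  case (Suc k)
  then obtain z where z: "z \<in> carrier R" "(\<one> \<ominus> a) [^] k = \<one> \<ominus> a \<otimes> z" by blast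
  have "(\<one> \<ominus> a) [^] Suc k = (\<one> \<ominus> a \<otimes> z) \<otimes> (\<one> \<ominus> a)" using z by simp
  also have "\<dots> = \<one> \<ominus> a \<otimes> (z \<oplus> \<one> \<ominus> a \<otimes> z)" using z(1) assms by algebra
  finally show ?case using z assms by blast
qed

lemma (in cring) PIdl_memE:
  "g \<in> carrier R \<Longrightarrow> x \<in> PIdl g \<Longrightarrow> \<exists>u. u \<in> carrier R \<and> x = u \<otimes> g"
  unfolding cgenideal_def by auto

lemma (in cring) assoc_helper:
  "g \<in> carrier R \<Longrightarrow> u \<in> carrier R \<Longrightarrow> e0 \<in> carrier R \<Longrightarrow> (u \<otimes> g) \<otimes> (e0 \<otimes> g) = u \<otimes> ((e0 \<otimes> g) \<otimes> g)"
  by algebra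

lemma (in cring) proj_gen:
  assumes g: "g \<in> carrier R" and e0: "e0 \<in> carrier R" and eq: "g = (e0 \<otimes> g) \<otimes> g"
  shows "projective_module R (ideal_module R (PIdl g))"
proof -
  define J where "J = PIdl g"
  define M where "M = ideal_module R J"
  have idJ: "ideal J R" unfolding J_def using g by (rule cgenideal_ideal)
  interpret J: ideal J R by (rule idJ)
  define e where "e = e0 \<otimes> g"
  have eJ: "e \<in> J" unfolding e_def J_def cgenideal_def using e0 by blast
  have ecarr: "e \<in> carrier R" using e0 g e_def by simp
  have xe: "x \<otimes> e = x" if "x \<in> J" for x
  proof -
    have xP: "x \<in> PIdl g" using that unfolding J_def .
    obtain u where u: "u \<in> carrier R" "x = u \<otimes> g" using PIdl_memE[OF g xP] by (elim exE conjE)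
    have "(u \<otimes> g) \<otimes> (e0 \<otimes> g) = u \<otimes> ((e0 \<otimes> g) \<otimes> g)" by (rule assoc_helper[OF g u(1) e0])
    then have "x \<otimes> e = u \<otimes> ((e0 \<otimes> g) \<otimes> g)" using u(2) e_def by simp
    also have "\<dots> = x" using eq[symmetric] u(2) by simp
    finally show ?thesis .
  qed
  have cM[simp]: "carrier M = J" "ring.add M = ring.add R" "ring.zero M = ring.zero R" "module.smult M = monoid.mult R"
    by (simp_all add: M_def ideal_module_def)
  have ag: "abelian_group M"
  proof (rule abelian_groupI)
    fix x assume "x \<in> carrier M"
    then show "\<exists>y\<in>carrier M. y \<oplus>\<^bsub>M\<^esub> x = \<zero>\<^bsub>M\<^esub>"
      by (intro bexI[of _ "\<ominus> x"]) (auto simp: J.Icarr l_neg)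
  qed (auto simp: J.a_closed J.zero_closed J.Icarr a_ac)
  have modM: "module R M"
    by (rule moduleI[OF is_cring ag])
      (auto simp: J.I_l_closed J.Icarr l_distr r_distr m_assoc)
  interpret M: abelian_group M by (rule ag)
  define s where "s = (\<lambda>x z. if z = e then x else \<zero>)"
  show ?thesis
    unfolding projective_module_def J_def[symmetric] M_def[symmetric]
  proof (intro conjI exI[of _ s] ballI modM)
    fix x assume x: "x \<in> carrier M"
    then have "{z. s x z \<noteq> \<zero>} \<subseteq> {e}" by (auto simp: s_def)
    then have "finite {z. s x z \<noteq> \<zero>}" by (rule finite_subset) simp
    then show "s x \<in> free_on_carrier R M"
      using x eJ by (auto simp: free_on_carrier_def s_def J.Icarr)
  next
    fix x y assume "x \<in> carrier M" "y \<in> carrier M"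
    then show "s (x \<oplus>\<^bsub>M\<^esub> y) = (\<lambda>z. s x z \<oplus> s y z)"
      by (auto simp: s_def)
  next
    fix a x assume "a \<in> carrier R" "x \<in> carrier M"
    then show "s (a \<odot>\<^bsub>M\<^esub> x) = (\<lambda>z. a \<otimes> s x z)"
      by (auto simp: s_def)
  next
    fix x assume x: "x \<in> carrier M"
    show "finsum M (\<lambda>z. s x z \<odot>\<^bsub>M\<^esub> z) {z \<in> carrier M. s x z \<noteq> \<zero>} = x"
    proof (cases "x = \<zero>")
      case True
      have E: "{z \<in> carrier M. s x z \<noteq> \<zero>} = {}" using True by (auto simp: s_def)
      show ?thesis unfolding E using True M.finsum_empty by simp
    next
      case False
      then have E: "{z \<in> carrier M. s x z \<noteq> \<zero>} = {e}" using eJ by (auto simp: s_def)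
      have fe: "s x e \<odot>\<^bsub>M\<^esub> e \<in> carrier M" using x xe by (simp add: s_def)
      have "finsum M (\<lambda>z. s x z \<odot>\<^bsub>M\<^esub> z) (insert e {}) = s x e \<odot>\<^bsub>M\<^esub> e \<oplus>\<^bsub>M\<^esub> finsum M (\<lambda>z. s x z \<odot>\<^bsub>M\<^esub> z) {}"
        by (rule M.finsum_insert) (use fe in auto)
      then have "finsum M (\<lambda>z. s x z \<odot>\<^bsub>M\<^esub> z) {e} = s x e \<odot>\<^bsub>M\<^esub> e"
        using fe M.finsum_empty M.r_zero by simp
      then show ?thesis unfolding E using x xe by (simp add: s_def)
    qed
  qed
qed

lemma (in cring) local_step:
  assumes mx: "maximalideal P R" and r: "r \<in> carrier R" and cn: "c \<le> n"
  shows "\<exists>w\<in>carrier R. r [^] n \<otimes> (\<one> \<ominus> r [^] n \<otimes> w) \<in> ideal_pow R P c"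
proof -
  interpret P: maximalideal P R by (rule mx)
  have idP: "ideal P R" by (rule P.is_ideal)
  have idPc: "ideal (ideal_pow R P c) R" by (rule ideal_pow_ideal[OF idP])
  interpret Pc: ideal "ideal_pow R P c" R by (rule idPc)
  have rn: "r [^] n \<in> carrier R" using r by simp
  show ?thesis
  proof (cases "r \<in> P")
    case True
    have "r [^] c \<in> ideal_pow R P c" by (rule ideal_pow_mem[OF idP True])
    moreover have "r [^] n = r [^] (n - c) \<otimes> r [^] c"
      using r cn by (simp add: nat_pow_mult)
    ultimately have "r [^] n \<in> ideal_pow R P c" using r by (simp add: Pc.I_l_closed)
    then show ?thesis using rn
      by (intro bexI[of _ \<zero>]) (simp_all add: Pc.I_r_closed a_minus_def)
  next
    case False
    have pr: "primeideal P R" by (rule maximalideal_prime[OF mx])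
    have rnP: "r [^] n \<notin> P"
    proof
      assume "r [^] n \<in> P"
      then show False using False r
      proof (induct n)
        case 0 then show ?case using P.I_notcarr P.one_imp_carrier by simp
      next
        case (Suc k)
        then have "r [^] k \<otimes> r \<in> P" by simp
        then have "r [^] k \<in> P \<or> r \<in> P" using primeideal.I_prime[OF pr] r by simp
        then show ?case using Suc by blast
      qed
    qed
    interpret F: field "R Quot P" by (rule P.quotient_is_field[OF is_cring])
    have hom: "ring_hom_cring R (R Quot P) ((+>) P)" by (rule P.rcos_ring_hom_cring[OF is_cring])
    have "P +> r [^] n \<noteq> P"
      using rnP P.a_rcos_const rn P.a_rcos_self by metis
    moreover have "P +> r [^] n \<in> carrier (R Quot P)"
      using a_rcosetsI[OF P.a_subset rn] by (simp add: FactRing_def)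
    ultimately have "P +> r [^] n \<in> Units (R Quot P)"
      using F.field_Units by (simp add: FactRing_def)
    then obtain v where v: "v \<in> carrier (R Quot P)" "(P +> r [^] n) \<otimes>\<^bsub>R Quot P\<^esub> v = \<one>\<^bsub>R Quot P\<^esub>"
      unfolding Units_def by auto
    obtain y where y: "y \<in> carrier R" "v = P +> y"
      using v(1) by (auto simp: FactRing_def A_RCOSETS_def')
    have "P +> (r [^] n \<otimes> y) = (P +> r [^] n) \<otimes>\<^bsub>R Quot P\<^esub> (P +> y)"
      using ring_hom_mult[OF P.rcos_ring_hom rn y(1)] by simp
    also have "\<dots> = \<one>\<^bsub>R Quot P\<^esub>" using v y by simp
    also have "\<dots> = P +> \<one>" by (simp add: FactRing_def)
    finally have "P +> (r [^] n \<otimes> y) = P +> \<one>" .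
    then have "r [^] n \<otimes> y \<ominus> \<one> \<in> P"
      using quotient_eq_iff_same_a_r_cos[OF idP] rn y by simp
    then have "\<ominus> (r [^] n \<otimes> y \<ominus> \<one>) \<in> P" by (simp add: P.a_inv_closed)
    moreover have "\<ominus> (r [^] n \<otimes> y \<ominus> \<one>) = \<one> \<ominus> r [^] n \<otimes> y" using rn y(1) by algebra
    ultimately have t: "\<one> \<ominus> r [^] n \<otimes> y \<in> P" by simp
    obtain z where z: "z \<in> carrier R" "(\<one> \<ominus> r [^] n \<otimes> y) [^] c = \<one> \<ominus> (r [^] n \<otimes> y) \<otimes> z"
      using one_minus_pow[of "r [^] n \<otimes> y" c] rn y by auto
    have "(\<one> \<ominus> r [^] n \<otimes> y) [^] c \<in> ideal_pow R P c" by (rule ideal_pow_mem[OF idP t])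
    then have "\<one> \<ominus> r [^] n \<otimes> (y \<otimes> z) \<in> ideal_pow R P c" using z rn y by (simp add: m_assoc)
    then have "r [^] n \<otimes> (\<one> \<ominus> r [^] n \<otimes> (y \<otimes> z)) \<in> ideal_pow R P c"
      using rn by (simp add: Pc.I_l_closed)
    then show ?thesis using y z by blast
  qed
qed

lemma (in cring) global_step:
  fixes d k n :: nat and c :: "nat \<Rightarrow> nat" and m :: "nat \<Rightarrow> 'a set"
  assumes mx: "\<And>i. i < d \<Longrightarrow> maximalideal (m i) R" and r: "r \<in> carrier R"
    and cn: "\<And>i. i < d \<Longrightarrow> c i \<le> n"
  shows "k \<le> d \<Longrightarrow> \<exists>w\<in>carrier R. \<forall>i<k. r [^] n \<otimes> (\<one> \<ominus> r [^] n \<otimes> w) \<in> ideal_pow R (m i) (c i)"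
proof (induct k)
  case 0 then show ?case by blast
next
  case (Suc k)
  define a where "a = r [^] n"
  have a: "a \<in> carrier R" using r a_def by simp
  obtain w where w: "w \<in> carrier R" "\<forall>i<k. a \<otimes> (\<one> \<ominus> a \<otimes> w) \<in> ideal_pow R (m i) (c i)"
    using Suc a_def by auto
  obtain w' where w': "w' \<in> carrier R" "a \<otimes> (\<one> \<ominus> a \<otimes> w') \<in> ideal_pow R (m k) (c k)"
    using local_step[OF mx[of k] r cn[of k]] Suc(2) a_def by auto
  define W where "W = w \<oplus> w' \<ominus> a \<otimes> w \<otimes> w'"
  have W: "W \<in> carrier R" using W_def a w w' by simp
  have eq1: "a \<otimes> (\<one> \<ominus> a \<otimes> W) = (a \<otimes> (\<one> \<ominus> a \<otimes> w)) \<otimes> (\<one> \<ominus> a \<otimes> w')"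
    unfolding W_def using a w(1) w'(1) by algebra
  have eq2: "a \<otimes> (\<one> \<ominus> a \<otimes> W) = (\<one> \<ominus> a \<otimes> w) \<otimes> (a \<otimes> (\<one> \<ominus> a \<otimes> w'))"
    unfolding W_def using a w(1) w'(1) by algebra
  have "\<forall>i<Suc k. a \<otimes> (\<one> \<ominus> a \<otimes> W) \<in> ideal_pow R (m i) (c i)"
  proof (intro allI impI)
    fix i assume i: "i < Suc k"
    have idi: "ideal (ideal_pow R (m i) (c i)) R"
      by (rule ideal_pow_ideal, rule maximalideal.axioms(1), rule mx) (use i Suc(2) in simp)
    show "a \<otimes> (\<one> \<ominus> a \<otimes> W) \<in> ideal_pow R (m i) (c i)"
    proof (cases "i < k")
      case True
      then show ?thesis using eq1 w w' a ideal.I_r_closed[OF idi] by simp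
    next
      case False
      then have "i = k" using i by simp
      then show ?thesis using eq2 w w' a ideal.I_l_closed[OF idi] by simp
    qed
  qed
  then show ?case using W a_def by blast
qed

theorem proposition2p6:
  fixes R :: "('a, 'b) ring_scheme"
    and m :: "nat \<Rightarrow> 'a set" and c :: "nat \<Rightarrow> nat" and d :: nat
  assumes "cring R"
    and "\<And>i. i < d \<Longrightarrow> maximalideal (m i) R"
    and "inj_on m {..<d}"
    and "\<And>i. i < d \<Longrightarrow> c i \<ge> 1"
  shows "GPP_ring (R Quot (carrier R \<inter> (\<Inter>i<d. ideal_pow R (m i) (c i))))"
proof -
  interpret R: cring R by (rule assms(1))
  define I0 where "I0 = carrier R \<inter> (\<Inter>i<d. ideal_pow R (m i) (c i))"
  have "I0 = \<Inter>(insert (carrier R) ((\<lambda>i. ideal_pow R (m i) (c i)) ` {..<d}))"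
    unfolding I0_def by simp
  moreover have "ideal (\<Inter>(insert (carrier R) ((\<lambda>i. ideal_pow R (m i) (c i)) ` {..<d}))) R"
  proof (rule R.i_Intersect)
    fix J assume "J \<in> insert (carrier R) ((\<lambda>i. ideal_pow R (m i) (c i)) ` {..<d})"
    then show "ideal J R"
      using R.oneideal R.ideal_pow_ideal maximalideal.axioms(1)[OF assms(2)] by auto
  qed simp
  ultimately have idI: "ideal I0 R" by simp
  interpret I: ideal I0 R by (rule idI)
  have cA: "cring (R Quot I0)" by (rule I.quotient_is_cring[OF assms(1)])
  have hom: "ring_hom_ring R (R Quot I0) ((a_r_coset R I0))" by (rule I.rcos_ring_hom_ring)
  show ?thesis
    unfolding I0_def[symmetric] GPP_ring_def
  proof (intro conjI cA ballI)
    fix f assume f: "f \<in> carrier (R Quot I0)"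
    obtain r where r: "r \<in> carrier R" "f = I0 +>\<^bsub>R\<^esub> r"
      using f by (auto simp: FactRing_def A_RCOSETS_def')
    define n where "n = sum c {..<d} + 1"
    have cn: "c i \<le> n" if "i < d" for i
    proof -
      have "c i \<le> sum c {..<d}" by (rule member_le_sum) (use that in auto)
      then show ?thesis unfolding n_def by simp
    qed
    obtain w where w: "w \<in> carrier R"
      "\<forall>i<d. r [^]\<^bsub>R\<^esub> n \<otimes>\<^bsub>R\<^esub> (\<one>\<^bsub>R\<^esub> \<ominus>\<^bsub>R\<^esub> r [^]\<^bsub>R\<^esub> n \<otimes>\<^bsub>R\<^esub> w) \<in> ideal_pow R (m i) (c i)"
      using R.global_step[where k=d and d=d and m=m and c=c and n=n and r=r, OF assms(2) r(1) cn] by auto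
    define a where "a = r [^]\<^bsub>R\<^esub> n"
    have a: "a \<in> carrier R" using r a_def by simp
    have "a \<otimes>\<^bsub>R\<^esub> (\<one>\<^bsub>R\<^esub> \<ominus>\<^bsub>R\<^esub> a \<otimes>\<^bsub>R\<^esub> w) \<in> I0"
      using w a unfolding I0_def a_def by auto
    moreover have "a \<otimes>\<^bsub>R\<^esub> (\<one>\<^bsub>R\<^esub> \<ominus>\<^bsub>R\<^esub> a \<otimes>\<^bsub>R\<^esub> w) = a \<ominus>\<^bsub>R\<^esub> (w \<otimes>\<^bsub>R\<^esub> a) \<otimes>\<^bsub>R\<^esub> a"
      using a w(1) by algebra
    ultimately have "I0 +>\<^bsub>R\<^esub> a = I0 +>\<^bsub>R\<^esub> ((w \<otimes>\<^bsub>R\<^esub> a) \<otimes>\<^bsub>R\<^esub> a)"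
      using R.quotient_eq_iff_same_a_r_cos[OF idI] a w by simp
    moreover have "f [^]\<^bsub>R Quot I0\<^esub> n = I0 +>\<^bsub>R\<^esub> a"
      using ring_hom_ring.hom_nat_pow[OF hom r(1)] r a_def by simp
    moreover have "I0 +>\<^bsub>R\<^esub> ((w \<otimes>\<^bsub>R\<^esub> a) \<otimes>\<^bsub>R\<^esub> a)
        = ((I0 +>\<^bsub>R\<^esub> w) \<otimes>\<^bsub>R Quot I0\<^esub> (I0 +>\<^bsub>R\<^esub> a)) \<otimes>\<^bsub>R Quot I0\<^esub> (I0 +>\<^bsub>R\<^esub> a)"
      using ring_hom_mult[OF I.rcos_ring_hom] a w by simp
    ultimately have eq: "f [^]\<^bsub>R Quot I0\<^esub> n
        = ((I0 +>\<^bsub>R\<^esub> w) \<otimes>\<^bsub>R Quot I0\<^esub> f [^]\<^bsub>R Quot I0\<^esub> n) \<otimes>\<^bsub>R Quot I0\<^esub> f [^]\<^bsub>R Quot I0\<^esub> n"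
      by simp
    have wc: "I0 +>\<^bsub>R\<^esub> w \<in> carrier (R Quot I0)"
      using ring_hom_closed[OF I.rcos_ring_hom w(1)] .
    have gc: "f [^]\<^bsub>R Quot I0\<^esub> n \<in> carrier (R Quot I0)"
      using f cA by (simp add: cring.axioms(1) ring.ring_simprules monoid.nat_pow_closed ring.is_monoid)
    have "projective_module (R Quot I0) (ideal_module (R Quot I0) (PIdl\<^bsub>R Quot I0\<^esub> (f [^]\<^bsub>R Quot I0\<^esub> n)))"
      by (rule cring.proj_gen[OF cA gc wc eq])
    then show "\<exists>n::nat. n \<ge> 1 \<and> projective_module (R Quot I0) (ideal_module (R Quot I0) (PIdl\<^bsub>R Quot I0\<^esub> (f [^]\<^bsub>R Quot I0\<^esub> n)))"
      using n_def by (intro exI[of _ n]) simp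
  qed
qed

end
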